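(* Let $\mu$ be a distribution over $\{-1,+1\}^n$, $\alpha\in(0,1)$, and $D\subseteq\mathbb R^n_{>0}$. Define $$D^{\mathrm{hom}}=\left\{(z_1,\dots,z_n,z_{\bar1},\dots,z_{\bar n})\in\mathbb R^{2n}_{>0}:\left(\tfrac{z_1}{z_{\bar1}},\dots,\tfrac{z_n}{z_{\bar n}}\right)\in D\right\}.$$ Then $\mu$ is $(1/\alpha)$-product dominated on $D$ if and only if $\mu^{\mathrm{hom}}$ is $(1/\alpha)$-entropically independent on $D^{\mathrm{hom}}$. In particular, $\mu$ is $(1/\alpha)$-product dominated if and only if $\mu^{\mathrm{hom}}$ is $(1/\alpha)$-entropically independent.
   Context: $\mu_i$ is the marginal of $\mu$ on coordinate $i$. The generating function of $\mu$ is $g_\mu(z)=\sum_\sigma\mu(\sigma)\prod_{i:\sigma_i=+1}z_i$. $\mu$ is $(1/\alpha)$-product dominated on $D$ if for all $z\in D$, $g_\mu(z_1^\alpha,\dots,z_n^\alpha)^{1/\alpha}\le\prod_{i=1}^n(\mu_i(+1)z_i+\mu_i(-1))$; "product dominated" without qualification means on $D=\mathbb R^n_{>0}$. Homogenization: with $[\bar n]=\{\bar1,\dots,\bar n\}$, $\mu^{\mathrm{hom}}$ is the distribution over $\binom{[n]\cup[\bar n]}{n}$ with $\mu^{\mathrm{hom}}(S_\sigma)=\mu(\sigma)$, where $S_\sigma=\{i:\sigma_i=+1\}\cup\{\bar i:\sigma_i=-1\}$, and $\mu^{\mathrm{hom}}(T)=0$ for other $T$. For a distribution $\pi$ over $\binom{U}{k}$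 with generating function $g_\pi(z)=\sum_S\pi(S)\prod_{i\in S}z_i$, $\pi$ is $(1/\alpha)$-entropically independent on $D'\subseteq\mathbb R^U_{>0}$ if for all $z\in D'$, $g_\pi(z^\alpha)^{1/(k\alpha)}\le\frac1k\sum_{i\in U}\Pr_{S\sim\pi}[i\in S]z_i$ (with $z^\alpha$ coordinatewise); without qualification, on $D'=\mathbb R^U_{>0}$. *)

theory Defs
  imports Complex_Main "HOL-Library.FuncSet"
begin

definition cube :: "nat \<Rightarrow> (nat \<Rightarrow> int) set" where
  "cube n = PiE {..<n} (\<lambda>_. {-1, 1})"

definition is_distr :: "nat \<Rightarrow> ((nat \<Rightarrow> int) \<Rightarrow> real) \<Rightarrow> bool" where
  "is_distr n mu \<longleftrightarrow> (\<forall>\<sigma>\<in>cube n. mu \<sigma> \<ge> 0) \<and> (\<Sum>\<sigma>\<in>cube n. mu \<sigma>) = 1"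

definition marg :: "nat \<Rightarrow> ((nat \<Rightarrow> int) \<Rightarrow> real) \<Rightarrow> nat \<Rightarrow> int \<Rightarrow> real" where
  "marg n mu i s = (\<Sum>\<sigma>\<in>cube n. if \<sigma> i = s then mu \<sigma> else 0)"

definition gen_cube :: "nat \<Rightarrow> ((nat \<Rightarrow> int) \<Rightarrow> real) \<Rightarrow> (nat \<Rightarrow> real) \<Rightarrow> real" where
  "gen_cube n mu z = (\<Sum>\<sigma>\<in>cube n. mu \<sigma> * (\<Prod>i\<in>{i. i < n \<and> \<sigma> i = 1}. z i))"

definition product_dominated_on ::
  "nat \<Rightarrow> ((nat \<Rightarrow> int) \<Rightarrow> real) \<Rightarrow> real \<Rightarrow> (nat \<Rightarrow> real) set \<Rightarrow> bool" where
  "product_dominated_on n mu \<alpha> D \<longleftrightarrow>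
     (\<forall>z\<in>D. (gen_cube n mu (\<lambda>i. z i powr \<alpha>)) powr (1 / \<alpha>)
              \<le> (\<Prod>i<n. marg n mu i 1 * z i + marg n mu i (-1)))"

definition pos_orthant :: "nat \<Rightarrow> (nat \<Rightarrow> real) set" where
  "pos_orthant n = {z. \<forall>i<n. z i > 0}"

text \<open>Ground set \<open>[n] \<union> [n\<bar>]\<close>: \<open>Inl i\<close> stands for \<open>i\<close>, \<open>Inr i\<close> for \<open>\<bar>i\<close>.\<close>
definition ground :: "nat \<Rightarrow> (nat + nat) set" where
  "ground n = Inl ` {..<n} \<union> Inr ` {..<n}"

definition S_of :: "nat \<Rightarrow> (nat \<Rightarrow> int) \<Rightarrow> (nat + nat) set" where
  "S_of n \<sigma> = Inl ` {i. i < n \<and> \<sigma> i = 1} \<union> Inr ` {i. i < n \<and> \<sigma> i = -1}"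

definition hom :: "nat \<Rightarrow> ((nat \<Rightarrow> int) \<Rightarrow> real) \<Rightarrow> (nat + nat) set \<Rightarrow> real" where
  "hom n mu T = (\<Sum>\<sigma>\<in>cube n. if S_of n \<sigma> = T then mu \<sigma> else 0)"

definition gen_sets :: "'a set \<Rightarrow> nat \<Rightarrow> ('a set \<Rightarrow> real) \<Rightarrow> ('a \<Rightarrow> real) \<Rightarrow> real" where
  "gen_sets U k \<pi> z = (\<Sum>S\<in>{S. S \<subseteq> U \<and> card S = k}. \<pi> S * (\<Prod>i\<in>S. z i))"

definition incl_prob :: "'a set \<Rightarrow> nat \<Rightarrow> ('a set \<Rightarrow> real) \<Rightarrow> 'a \<Rightarrow> real" where
  "incl_prob U k \<pi> i = (\<Sum>S\<in>{S. S \<subseteq> U \<and> card S = k}. if i \<in> S then \<pi> S else 0)"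

definition entropically_independent_on ::
  "'a set \<Rightarrow> nat \<Rightarrow> ('a set \<Rightarrow> real) \<Rightarrow> real \<Rightarrow> ('a \<Rightarrow> real) set \<Rightarrow> bool" where
  "entropically_independent_on U k \<pi> \<alpha> D' \<longleftrightarrow>
     (\<forall>z\<in>D'. (gen_sets U k \<pi> (\<lambda>i. z i powr \<alpha>)) powr (1 / (real k * \<alpha>))
              \<le> (1 / real k) * (\<Sum>i\<in>U. incl_prob U k \<pi> i * z i))"

definition pos_orthant_on :: "'a set \<Rightarrow> ('a \<Rightarrow> real) set" where
  "pos_orthant_on U = {z. \<forall>i\<in>U. z i > 0}"

definition D_hom :: "nat \<Rightarrow> (nat \<Rightarrow> real) set \<Rightarrow> (nat + nat \<Rightarrow> real) set" where
  "D_hom n D = {z. (\<forall>x\<in>ground n. z x > 0) \<and>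
                   (\<exists>w\<in>D. \<forall>i<n. w i = z (Inl i) / z (Inr i))}"

end

theory Submission
  imports Defs "HOL-Analysis.Convex"
begin

lemma finite_cube: "finite (cube n)"
  unfolding cube_def by (intro finite_PiE) auto

lemma cube_val: "\<sigma> \<in> cube n \<Longrightarrow> i < n \<Longrightarrow> \<sigma> i = 1 \<or> \<sigma> i = -1"
  unfolding cube_def by (auto simp: PiE_def Pi_def)

definition sel :: "(nat \<Rightarrow> int) \<Rightarrow> nat \<Rightarrow> nat + nat" where
  "sel \<sigma> i = (if \<sigma> i = 1 then Inl i else Inr i)"

lemma S_of_img: "\<sigma> \<in> cube n \<Longrightarrow> S_of n \<sigma> = sel \<sigma> ` {..<n}"
  unfolding S_of_def sel_def using cube_val[of \<sigma> n] by (auto; force)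

lemma inj_sel: "inj_on (sel \<sigma>) A"
  unfolding sel_def inj_on_def by (auto split: if_splits)

lemma S_of_in: "\<sigma> \<in> cube n \<Longrightarrow> S_of n \<sigma> \<in> {S. S \<subseteq> ground n \<and> card S = n}"
proof -
  assume a: "\<sigma> \<in> cube n"
  have c: "card (S_of n \<sigma>) = n"
    unfolding S_of_img[OF a] using inj_sel[of \<sigma> "{..<n}"] by (simp add: card_image)
  have "S_of n \<sigma> \<subseteq> ground n" unfolding S_of_def ground_def by auto
  with c show ?thesis by simp
qed

lemma finite_sets: "finite {S. S \<subseteq> ground n \<and> card S = k}"
proof -
  have "finite (ground n)" unfolding ground_def by auto
  then show ?thesis by (rule finite_subset[rotated, OF finite_Pow_iff[THEN iffD2]]) auto
qed

lemma hom_sum: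
  "(\<Sum>S\<in>{S. S \<subseteq> ground n \<and> card S = n}. hom n mu S * F S)
   = (\<Sum>\<sigma>\<in>cube n. mu \<sigma> * F (S_of n \<sigma>))"
proof -
  have "(\<Sum>S\<in>{S. S \<subseteq> ground n \<and> card S = n}. hom n mu S * F S)
     = (\<Sum>S\<in>{S. S \<subseteq> ground n \<and> card S = n}. \<Sum>\<sigma>\<in>cube n. (if S_of n \<sigma> = S then mu \<sigma> * F S else 0))"
    unfolding hom_def sum_distrib_right by (intro sum.cong refl) auto
  also have "\<dots> = (\<Sum>\<sigma>\<in>cube n. \<Sum>S\<in>{S. S \<subseteq> ground n \<and> card S = n}. (if S_of n \<sigma> = S then mu \<sigma> * F S else 0))"
    by (rule sum.swap)
  also have "\<dots> = (\<Sum>\<sigma>\<in>cube n. mu \<sigma> * F (S_of n \<sigma>))"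
    using S_of_in finite_sets by (intro sum.cong refl) (simp add: sum.delta)
  finally show ?thesis .
qed


lemma sum_ground: "(\<Sum>x\<in>ground n. f x) = (\<Sum>i<n. f (Inl i) + f (Inr i))"
proof -
  have "(\<Sum>x\<in>ground n. f x) = (\<Sum>x\<in>Inl ` {..<n}. f x) + (\<Sum>x\<in>Inr ` {..<n}. f x)"
    unfolding ground_def by (rule sum.union_disjoint) auto
  also have "\<dots> = (\<Sum>i<n. f (Inl i)) + (\<Sum>i<n. f (Inr i))"
    by (simp add: sum.reindex)
  finally show ?thesis by (simp add: sum.distrib)
qed

lemma incl_Inl: "i < n \<Longrightarrow> incl_prob (ground n) n (hom n mu) (Inl i) = marg n mu i 1"
proof -
  assume i: "i < n"
  have "incl_prob (ground n) n (hom n mu) (Inl i)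
     = (\<Sum>S\<in>{S. S \<subseteq> ground n \<and> card S = n}. hom n mu S * (if Inl i \<in> S then 1 else 0))"
    unfolding incl_prob_def by (intro sum.cong refl) auto
  also have "\<dots> = (\<Sum>\<sigma>\<in>cube n. mu \<sigma> * (if Inl i \<in> S_of n \<sigma> then 1 else 0))"
    by (rule hom_sum)
  also have "\<dots> = marg n mu i 1"
    unfolding marg_def using i by (intro sum.cong refl) (auto simp: S_of_def)
  finally show ?thesis .
qed

lemma incl_Inr: "i < n \<Longrightarrow> incl_prob (ground n) n (hom n mu) (Inr i) = marg n mu i (-1)"
proof -
  assume i: "i < n"
  have "incl_prob (ground n) n (hom n mu) (Inr i)
     = (\<Sum>S\<in>{S. S \<subseteq> ground n \<and> card S = n}. hom n mu S * (if Inr i \<in> S then 1 else 0))"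
    unfolding incl_prob_def by (intro sum.cong refl) auto
  also have "\<dots> = (\<Sum>\<sigma>\<in>cube n. mu \<sigma> * (if Inr i \<in> S_of n \<sigma> then 1 else 0))"
    by (rule hom_sum)
  also have "\<dots> = marg n mu i (-1)"
    unfolding marg_def using i by (intro sum.cong refl) (auto simp: S_of_def)
  finally show ?thesis .
qed

lemma marg_sum: "is_distr n mu \<Longrightarrow> i < n \<Longrightarrow> marg n mu i 1 + marg n mu i (-1) = 1"
proof -
  assume d: "is_distr n mu" and i: "i < n"
  have "marg n mu i 1 + marg n mu i (-1) = (\<Sum>\<sigma>\<in>cube n. mu \<sigma>)"
    unfolding marg_def sum.distrib[symmetric]
  proof (intro sum.cong refl)
    fix \<sigma> assume "\<sigma> \<in> cube n"
    then have "\<sigma> i = 1 \<or> \<sigma> i = -1" using cube_val i by blast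
    then show "(if \<sigma> i = 1 then mu \<sigma> else 0) + (if \<sigma> i = -1 then mu \<sigma> else 0) = mu \<sigma>" by auto
  qed
  then show ?thesis using d unfolding is_distr_def by simp
qed

lemma marg_nonneg: "is_distr n mu \<Longrightarrow> marg n mu i s \<ge> 0"
  unfolding marg_def is_distr_def by (intro sum_nonneg) auto

lemma gen_cube_nonneg: "is_distr n mu \<Longrightarrow> (\<And>i. z i \<ge> 0) \<Longrightarrow> gen_cube n mu z \<ge> 0"
  unfolding gen_cube_def is_distr_def by (intro sum_nonneg mult_nonneg_nonneg prod_nonneg) auto

lemma gen_sets_eq:
  assumes pos: "\<forall>x\<in>ground n. z x > 0"
  shows "gen_sets (ground n) n (hom n mu) (\<lambda>x. z x powr \<alpha>)
    = (\<Prod>i<n. z (Inr i)) powr \<alpha> * gen_cube n mu (\<lambda>i. (z (Inl i) / z (Inr i)) powr \<alpha>)"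
proof -
  have pl: "i < n \<Longrightarrow> z (Inl i) > 0" and pr: "i < n \<Longrightarrow> z (Inr i) > 0" for i
    using pos unfolding ground_def by auto
  have "gen_sets (ground n) n (hom n mu) (\<lambda>x. z x powr \<alpha>)
      = (\<Sum>\<sigma>\<in>cube n. mu \<sigma> * (\<Prod>x\<in>S_of n \<sigma>. z x powr \<alpha>))"
    unfolding gen_sets_def by (rule hom_sum)
  also have "\<dots> = (\<Sum>\<sigma>\<in>cube n. (\<Prod>i<n. z (Inr i)) powr \<alpha> * (mu \<sigma> *
          (\<Prod>i\<in>{i. i < n \<and> \<sigma> i = 1}. (z (Inl i) / z (Inr i)) powr \<alpha>)))"
  proof (intro sum.cong refl)
    fix \<sigma> assume s: "\<sigma> \<in> cube n"
    have "(\<Prod>x\<in>S_of n \<sigma>. z x powr \<alpha>) = (\<Prod>i<n. z (sel \<sigma> i) powr \<alpha>)"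
      unfolding S_of_img[OF s] by (simp add: prod.reindex[OF inj_sel])
    also have "\<dots> = (\<Prod>i<n. z (Inr i) powr \<alpha> * (if \<sigma> i = 1 then (z (Inl i) / z (Inr i)) powr \<alpha> else 1))"
      using pl pr by (intro prod.cong refl) (auto simp: sel_def powr_divide; metis less_irrefl pr)
    also have "\<dots> = (\<Prod>i<n. z (Inr i) powr \<alpha>) * (\<Prod>i<n. (if \<sigma> i = 1 then (z (Inl i) / z (Inr i)) powr \<alpha> else 1))"
      by (rule prod.distrib)
    also have "(\<Prod>i<n. z (Inr i) powr \<alpha>) = (\<Prod>i<n. z (Inr i)) powr \<alpha>"
      using pr by (subst prod_powr_distrib) auto
    also have "(\<Prod>i<n. (if \<sigma> i = 1 then (z (Inl i) / z (Inr i)) powr \<alpha> else 1))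
        = (\<Prod>i\<in>{i. i < n \<and> \<sigma> i = 1}. (z (Inl i) / z (Inr i)) powr \<alpha>)"
      by (subst prod.inter_filter[symmetric]) (auto intro: prod.cong)
    finally show "mu \<sigma> * (\<Prod>x\<in>S_of n \<sigma>. z x powr \<alpha>) = (\<Prod>i<n. z (Inr i)) powr \<alpha> * (mu \<sigma> *
          (\<Prod>i\<in>{i. i < n \<and> \<sigma> i = 1}. (z (Inl i) / z (Inr i)) powr \<alpha>))" by simp
  qed
  also have "\<dots> = (\<Prod>i<n. z (Inr i)) powr \<alpha> * gen_cube n mu (\<lambda>i. (z (Inl i) / z (Inr i)) powr \<alpha>)"
    unfolding gen_cube_def by (simp add: sum_distrib_left)
  finally show ?thesis .
qed


lemma gen_cube_cong: "(\<And>i. i < n \<Longrightarrow> f i = g i) \<Longrightarrow> gen_cube n mu f = gen_cube n mu g"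
  unfolding gen_cube_def by (intro sum.cong refl arg_cong2[where f="(*)"] prod.cong) auto

lemma powr_cancel: "0 \<le> x \<Longrightarrow> 0 \<le> y \<Longrightarrow> 0 < r \<Longrightarrow> x powr r \<le> y powr r \<Longrightarrow> x \<le> (y::real)"
  by (metis linorder_not_le powr_less_mono2)

lemma a_pos:
  assumes "is_distr n mu" "i < n" "w i > 0"
  shows "marg n mu i 1 * w i + marg n mu i (-1) > 0"
proof (cases "marg n mu i 1 > 0")
  case True
  then show ?thesis using assms marg_nonneg[OF assms(1), of i "-1"] by (simp add: add_pos_nonneg)
next
  case False
  then have "marg n mu i 1 = 0" using marg_nonneg[OF assms(1), of i 1] by simp
  then show ?thesis using marg_sum[OF assms(1,2)] by simp
qed

lemma rhs_eq:
  "(\<Sum>x\<in>ground n. incl_prob (ground n) n (hom n mu) x * z x)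
   = (\<Sum>i<n. marg n mu i 1 * z (Inl i) + marg n mu i (-1) * z (Inr i))"
  unfolding sum_ground by (intro sum.cong refl) (simp add: incl_Inl incl_Inr)

lemma PD_to_EI:
  assumes d: "is_distr n mu" and n: "n \<ge> 1" and al: "\<alpha> > 0"
    and pos: "\<forall>x\<in>ground n. z x > 0"
    and w: "\<forall>i<n. w i = z (Inl i) / z (Inr i)"
    and pd: "(gen_cube n mu (\<lambda>i. w i powr \<alpha>)) powr (1 / \<alpha>)
              \<le> (\<Prod>i<n. marg n mu i 1 * w i + marg n mu i (-1))"
  shows "(gen_sets (ground n) n (hom n mu) (\<lambda>i. z i powr \<alpha>)) powr (1 / (real n * \<alpha>))
              \<le> (1 / real n) * (\<Sum>i\<in>ground n. incl_prob (ground n) n (hom n mu) i * z i)"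
proof -
  have pl: "i < n \<Longrightarrow> z (Inl i) > 0" and pr: "i < n \<Longrightarrow> z (Inr i) > 0" for i
    using pos unfolding ground_def by auto
  define G where "G = gen_cube n mu (\<lambda>i. w i powr \<alpha>)"
  define P where "P = (\<Prod>i<n. z (Inr i))"
  define A where "A = (\<Prod>i<n. marg n mu i 1 * w i + marg n mu i (-1))"
  have G0: "G \<ge> 0" unfolding G_def by (rule gen_cube_nonneg[OF d]) simp
  have P0: "P \<ge> 0" unfolding P_def using pr by (intro prod_nonneg) (auto simp: less_imp_le)
  have gs: "gen_sets (ground n) n (hom n mu) (\<lambda>i. z i powr \<alpha>) = P powr \<alpha> * G"
  proof -
    have "gen_cube n mu (\<lambda>i. (z (Inl i) / z (Inr i)) powr \<alpha>) = G"
      unfolding G_def by (rule gen_cube_cong) (simp add: w)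
    then show ?thesis unfolding gen_sets_eq[OF pos] P_def by simp
  qed
  have e1: "(P powr \<alpha>) powr (1 / (real n * \<alpha>)) = P powr (1 / real n)"
    unfolding powr_powr using al n by simp
  have e2: "G powr (1 / (real n * \<alpha>)) = (G powr (1/\<alpha>)) powr (1 / real n)"
    unfolding powr_powr by (simp add: mult.commute)
  have "(P powr \<alpha> * G) powr (1 / (real n * \<alpha>)) = P powr (1 / real n) * (G powr (1/\<alpha>)) powr (1 / real n)"
    unfolding powr_mult e1 e2 ..
  also have "\<dots> \<le> P powr (1 / real n) * A powr (1 / real n)"
  proof (rule mult_left_mono)
    show "(G powr (1/\<alpha>)) powr (1 / real n) \<le> A powr (1 / real n)"
      by (rule powr_mono2) (use pd in \<open>simp_all add: G_def A_def\<close>)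
  qed simp
  also have "\<dots> = (P * A) powr (1 / real n)" by (simp only: powr_mult)
  also have "P * A = (\<Prod>i<n. marg n mu i 1 * z (Inl i) + marg n mu i (-1) * z (Inr i))"
    unfolding P_def A_def prod.distrib[symmetric]
  proof (intro prod.cong refl)
    fix i assume "i \<in> {..<n}"
    then have i: "i < n" by simp
    have "z (Inr i) \<noteq> 0" using pr[OF i] by simp
    then show "z (Inr i) * (marg n mu i 1 * w i + marg n mu i (-1))
       = marg n mu i 1 * z (Inl i) + marg n mu i (-1) * z (Inr i)"
      using w i by (simp add: distrib_left)
  qed
  also have "(\<Prod>i<n. marg n mu i 1 * z (Inl i) + marg n mu i (-1) * z (Inr i)) powr (1 / real n)
      \<le> (\<Sum>i<n. (marg n mu i 1 * z (Inl i) + marg n mu i (-1) * z (Inr i)) / real n)"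
  proof -
    have nn: "\<And>i. i \<in> {..<n} \<Longrightarrow> marg n mu i 1 * z (Inl i) + marg n mu i (-1) * z (Inr i) \<ge> 0"
    proof -
      fix i assume "i \<in> {..<n}"
      then have "z (Inl i) \<ge> 0" "z (Inr i) \<ge> 0" using pl pr by (auto simp: less_imp_le)
      then show "marg n mu i 1 * z (Inl i) + marg n mu i (-1) * z (Inr i) \<ge> 0"
        using marg_nonneg[OF d] by (simp add: add_nonneg_nonneg mult_nonneg_nonneg)
    qed
    have "{..<n} \<noteq> {}" using n by (simp add: lessThan_empty_iff)
    from arith_geom_mean[OF finite_lessThan this nn] show ?thesis by simp
  qed
  also have "\<dots> = (1 / real n) * (\<Sum>i\<in>ground n. incl_prob (ground n) n (hom n mu) i * z i)"
    unfolding rhs_eq by (simp add: sum_divide_distrib)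
  finally show ?thesis using gs by simp
qed

lemma EI_to_PD:
  assumes d: "is_distr n mu" and n: "n \<ge> 1" and al: "\<alpha> > 0"
    and wpos: "\<forall>i<n. w i > 0"
    and ei: "\<And>z. \<forall>x\<in>ground n. z x > 0 \<Longrightarrow> \<forall>i<n. w i = z (Inl i) / z (Inr i) \<Longrightarrow>
      (gen_sets (ground n) n (hom n mu) (\<lambda>i. z i powr \<alpha>)) powr (1 / (real n * \<alpha>))
              \<le> (1 / real n) * (\<Sum>i\<in>ground n. incl_prob (ground n) n (hom n mu) i * z i)"
  shows "(gen_cube n mu (\<lambda>i. w i powr \<alpha>)) powr (1 / \<alpha>)
              \<le> (\<Prod>i<n. marg n mu i 1 * w i + marg n mu i (-1))"
proof -
  define a where "a i = marg n mu i 1 * w i + marg n mu i (-1)" for i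
  have apos: "i < n \<Longrightarrow> a i > 0" for i unfolding a_def using a_pos[OF d] wpos by auto
  define z where "z = case_sum (\<lambda>i. w i / a i) (\<lambda>i. 1 / a i)"
  have zpos: "\<forall>x\<in>ground n. z x > 0" unfolding ground_def z_def using apos wpos by auto
  have zw: "\<forall>i<n. w i = z (Inl i) / z (Inr i)" unfolding z_def using apos by (auto simp: less_imp_neq[symmetric])
  define G where "G = gen_cube n mu (\<lambda>i. w i powr \<alpha>)"
  define A where "A = (\<Prod>i<n. a i)"
  have G0: "G \<ge> 0" unfolding G_def by (rule gen_cube_nonneg[OF d]) simp
  have A0: "A > 0" unfolding A_def using apos by (intro prod_pos) auto
  have P: "(\<Prod>i<n. z (Inr i)) = 1 / A" unfolding A_def z_def by (simp add: prod_dividef)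
  have gs: "gen_sets (ground n) n (hom n mu) (\<lambda>i. z i powr \<alpha>) = (1/A) powr \<alpha> * G"
  proof -
    have "gen_cube n mu (\<lambda>i. (z (Inl i) / z (Inr i)) powr \<alpha>) = G"
      unfolding G_def by (rule gen_cube_cong) (simp add: zw)
    then show ?thesis unfolding gen_sets_eq[OF zpos] P by simp
  qed
  have r: "(\<Sum>i\<in>ground n. incl_prob (ground n) n (hom n mu) i * z i) = real n"
  proof -
    have "(\<Sum>i\<in>ground n. incl_prob (ground n) n (hom n mu) i * z i) = (\<Sum>i<n. (1::real))"
      unfolding rhs_eq
    proof (intro sum.cong refl)
      fix i assume "i \<in> {..<n}"
      then have ai: "a i \<noteq> 0" using apos by (simp add: less_imp_neq[symmetric])
      have "marg n mu i 1 * z (Inl i) + marg n mu i (- 1) * z (Inr i)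
          = (marg n mu i 1 * w i + marg n mu i (- 1)) / a i"
        unfolding z_def by (simp add: add_divide_distrib)
      also have "\<dots> = 1" using ai unfolding a_def by simp
      finally show "marg n mu i 1 * z (Inl i) + marg n mu i (- 1) * z (Inr i) = 1" .
    qed
    then show ?thesis by simp
  qed
  have "((1/A) powr \<alpha> * G) powr (1 / (real n * \<alpha>)) \<le> 1"
    using ei[OF zpos zw] gs r n by simp
  moreover have "((1/A) powr \<alpha> * G) powr (1 / (real n * \<alpha>)) = (1/A) powr (1 / real n) * (G powr (1/\<alpha>)) powr (1 / real n)"
    using al n by (simp add: powr_mult powr_powr mult.commute)
  moreover have "(1/A) powr (1 / real n) = 1 / A powr (1 / real n)"
    by (simp add: powr_divide)
  moreover have B0: "A powr (1 / real n) > 0" using A0 by simp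
  ultimately have "(G powr (1/\<alpha>)) powr (1 / real n) / A powr (1 / real n) \<le> 1"
    by simp
  then have "(G powr (1/\<alpha>)) powr (1 / real n) \<le> A powr (1 / real n)"
    using B0 by (simp add: pos_divide_le_eq)
  then have "G powr (1/\<alpha>) \<le> A"
    by (rule powr_cancel[rotated 3]) (use n A0 in auto)
  then show ?thesis unfolding G_def A_def a_def .
qed

lemma part1:
  assumes d: "is_distr n mu" and n: "n \<ge> 1" and al: "\<alpha> > 0" and D: "D \<subseteq> pos_orthant n"
  shows "product_dominated_on n mu \<alpha> D \<longleftrightarrow>
           entropically_independent_on (ground n) n (hom n mu) \<alpha> (D_hom n D)"
proof
  assume pd: "product_dominated_on n mu \<alpha> D"
  show "entropically_independent_on (ground n) n (hom n mu) \<alpha> (D_hom n D)"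
    unfolding entropically_independent_on_def
  proof
    fix z assume "z \<in> D_hom n D"
    then obtain w where pos: "\<forall>x\<in>ground n. z x > 0" and wD: "w \<in> D"
      and w: "\<forall>i<n. w i = z (Inl i) / z (Inr i)" unfolding D_hom_def by auto
    show "(gen_sets (ground n) n (hom n mu) (\<lambda>i. z i powr \<alpha>)) powr (1 / (real n * \<alpha>))
              \<le> (1 / real n) * (\<Sum>i\<in>ground n. incl_prob (ground n) n (hom n mu) i * z i)"
      by (rule PD_to_EI[OF d n al pos w]) (use pd wD in \<open>auto simp: product_dominated_on_def\<close>)
  qed
next
  assume ei: "entropically_independent_on (ground n) n (hom n mu) \<alpha> (D_hom n D)"
  show "product_dominated_on n mu \<alpha> D"
    unfolding product_dominated_on_def
  proof
    fix w assume wD: "w \<in> D"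
    then have wpos: "\<forall>i<n. w i > 0" using D by (auto simp: pos_orthant_def)
    show "(gen_cube n mu (\<lambda>i. w i powr \<alpha>)) powr (1 / \<alpha>)
              \<le> (\<Prod>i<n. marg n mu i 1 * w i + marg n mu i (-1))"
    proof (rule EI_to_PD[OF d n al wpos])
      fix z assume "\<forall>x\<in>ground n. z x > 0" "\<forall>i<n. w i = z (Inl i) / z (Inr i)"
      then have "z \<in> D_hom n D" unfolding D_hom_def using wD by auto
      then show "(gen_sets (ground n) n (hom n mu) (\<lambda>i. z i powr \<alpha>)) powr (1 / (real n * \<alpha>))
              \<le> (1 / real n) * (\<Sum>i\<in>ground n. incl_prob (ground n) n (hom n mu) i * z i)"
        using ei unfolding entropically_independent_on_def by blast
    qed
  qed
qed

lemma D_hom_orthant: "D_hom n (pos_orthant n) = pos_orthant_on (ground n)"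
proof (intro set_eqI iffI)
  fix z assume "z \<in> pos_orthant_on (ground n)"
  then have "\<forall>x\<in>ground n. z x > 0" by (simp add: pos_orthant_on_def)
  moreover have "(\<lambda>i. z (Inl i) / z (Inr i)) \<in> pos_orthant n"
    using calculation unfolding pos_orthant_def ground_def by auto
  ultimately show "z \<in> D_hom n (pos_orthant n)" unfolding D_hom_def by auto
qed (auto simp: D_hom_def pos_orthant_on_def)

theorem lemma4p4:
  fixes n :: nat and mu :: "(nat \<Rightarrow> int) \<Rightarrow> real" and \<alpha> :: real
    and D :: "(nat \<Rightarrow> real) set"
  assumes "n \<ge> 1"
    and "is_distr n mu"
    and "0 < \<alpha>" and "\<alpha> < 1"
    and "D \<subseteq> pos_orthant n"
  shows "(product_dominated_on n mu \<alpha> D \<longleftrightarrow>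
           entropically_independent_on (ground n) n (hom n mu) \<alpha> (D_hom n D))
       \<and> (product_dominated_on n mu \<alpha> (pos_orthant n) \<longleftrightarrow>
           entropically_independent_on (ground n) n (hom n mu) \<alpha> (pos_orthant_on (ground n)))"
  using part1[OF assms(2,1,3,5)] part1[OF assms(2,1,3), of "pos_orthant n"] D_hom_orthant[of n]
  by simp

end
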